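(* Let $1\le p\le 2$, let $X$ and $Y$ be Banach spaces such that $X$ has type $p$, and let $u:X\to Y$ be a continuous linear operator. If the adjoint $u^*:Y^*\to X^*$ is almost $p^*$-summing (where $\frac1p+\frac1{p^*}=1$), then $u$ is Cohen strongly $p$-summing, i.e. $(u(x_i))_{i=1}^\infty\in\ell_p\langle Y\rangle$ whenever $(x_i)_{i=1}^\infty\in\ell_p(X)$.
   Context: $r_i$ denote the Rademacher functions. A Banach space $X$ has type $p$ if there is $C\ge0$ with $\left(\int_0^1\left\|\sum_{i=1}^m r_i(t)x_i\right\|^2dt\right)^{1/2}\le C\left(\sum_{i=1}^m\|x_i\|^p\right)^{1/p}$ for all $m$ and $x_1,\dots,x_m\in X$. For $1\le s\le\infty$, $\|(x_i)\|_{w,s}:=\sup_{x^*\in B_{X^*}}\|(x^*(x_i))_i\|_s$ and $\ell_s^w(X)$ is the space of sequences where this is finite. $\ell_p\langle Y\rangle$ is the space of sequences $(y_i)\subset Y$ with $\sup\{\sum_i|y_i^*(y_i)|:(y_i^* )\in B_{\ell_{p^*}^w(Y^* )}\}<\infty$. An operator $v\in\mathcal L(E,F)$ is almost $s$-summing if there is $C\ge0$ with $\left(\int_0^1\left\|\sum_{i=1}^m r_i(t)v(x_i)\right\|^2dt\right)^{1/2}\le C\|(x_i)_{i=1}^m\|_{w,s}$ for all $m$ and $x_1,\dots,x_m\in E$. *)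

theory Defs
  imports "HOL-Analysis.Analysis"
begin

definition rademacher :: "nat \<Rightarrow> real \<Rightarrow> real" where
  "rademacher i t = sgn (sin (2 ^ i * pi * t))"

definition rad_avg :: "(nat \<Rightarrow> 'a::real_normed_vector) \<Rightarrow> nat \<Rightarrow> real" where
  "rad_avg x m = sqrt (integral {0..1} (\<lambda>t. (norm (\<Sum>i=1..m. rademacher i t *\<^sub>R x i))\<^sup>2))"

definition seq_norm :: "ereal \<Rightarrow> (nat \<Rightarrow> real) \<Rightarrow> ereal" where
  "seq_norm s a =
     (if s = \<infinity> then (SUP i. ereal \<bar>a i\<bar>)
      else if summable (\<lambda>i. \<bar>a i\<bar> powr real_of_ereal s)
        then ereal ((\<Sum>i. \<bar>a i\<bar> powr real_of_ereal s) powr (1 / real_of_ereal s))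
        else \<infinity>)"

definition weak_norm :: "ereal \<Rightarrow> (nat \<Rightarrow> 'a::real_normed_vector) \<Rightarrow> ereal" where
  "weak_norm s x = (SUP f\<in>{f :: 'a \<Rightarrow>\<^sub>L real. norm f \<le> 1}. seq_norm s (\<lambda>i. blinfun_apply f (x i)))"

definition conj_exp :: "real \<Rightarrow> ereal" where
  "conj_exp p = (if p = 1 then \<infinity> else ereal (p / (p - 1)))"

definition has_type :: "'a::real_normed_vector itself \<Rightarrow> real \<Rightarrow> bool" where
  "has_type _ p \<longleftrightarrow> (\<exists>C\<ge>0. \<forall>m (x :: nat \<Rightarrow> 'a).
      rad_avg x m \<le> C * (\<Sum>i=1..m. norm (x i) powr p) powr (1 / p))"

definition almost_summing :: "ereal \<Rightarrow> ('a::real_normed_vector \<Rightarrow> 'b::real_normed_vector) \<Rightarrow> bool" where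
  "almost_summing s v \<longleftrightarrow> (\<exists>C\<ge>0. \<forall>m (x :: nat \<Rightarrow> 'a).
      ereal (rad_avg (\<lambda>i. v (x i)) m) \<le> ereal C * weak_norm s (\<lambda>i. if i \<in> {1..m} then x i else 0))"

definition in_lp :: "real \<Rightarrow> (nat \<Rightarrow> 'a::real_normed_vector) \<Rightarrow> bool" where
  "in_lp p x \<longleftrightarrow> summable (\<lambda>i. norm (x i) powr p)"

definition in_cohen_lp :: "real \<Rightarrow> (nat \<Rightarrow> 'b::real_normed_vector) \<Rightarrow> bool" where
  "in_cohen_lp p y \<longleftrightarrow>
     (SUP ys\<in>{ys :: nat \<Rightarrow> ('b \<Rightarrow>\<^sub>L real). weak_norm (conj_exp p) ys \<le> 1}.
        (if summable (\<lambda>i. \<bar>blinfun_apply (ys i) (y i)\<bar>)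
         then ereal (\<Sum>i. \<bar>blinfun_apply (ys i) (y i)\<bar>) else \<infinity>)) < \<infinity>"

definition cohen_strongly_summing :: "real \<Rightarrow> ('a::real_normed_vector \<Rightarrow>\<^sub>L 'b::real_normed_vector) \<Rightarrow> bool" where
  "cohen_strongly_summing p u \<longleftrightarrow>
     (\<forall>x. in_lp p x \<longrightarrow> in_cohen_lp p (\<lambda>i. blinfun_apply u (x i)))"

end

theory Submission
  imports Defs
begin


lemma sin_sign:
  fixes y :: real and q :: nat
  assumes "real q < y" "y < real q + 1"
  shows "sgn (sin (pi * y)) = (-1) ^ q"
proof -
  define z where "z = y - real q"
  have z: "0 < z" "z < 1" using assms by (auto simp: z_def)
  have "sin (pi * y) = sin (pi * z + real q * pi)" by (simp add: z_def algebra_simps)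
  also have "\<dots> = (-1) ^ q * sin (pi * z)" by (simp add: sin_add)
  finally have e: "sin (pi * y) = (-1) ^ q * sin (pi * z)" .
  have "0 < sin (pi * z)" using z by (intro sin_gt_zero) auto
  then show ?thesis unfolding e by (simp add: sgn_mult)
qed

lemma rademacher_step:
  fixes t :: real and k m i :: nat
  assumes "i \<le> m" "real k / 2^m < t" "t < (real k + 1) / 2^m"
  shows "rademacher i t = (-1) ^ (k div 2 ^ (m - i))"
proof -
  define d :: nat where "d = 2 ^ (m - i)"
  define q where "q = k div d"
  have dpos: "d > 0" by (simp add: d_def)
  have mm: "m = i + (m - i)" using assms(1) by simp
  have m: "(2::real) ^ m = 2 ^ i * real d" unfolding d_def of_nat_power of_nat_numeral by (subst mm) (simp only: power_add)
  have t1: "real k < 2 ^ m * t" "2 ^ m * t < real k + 1" using assms by (auto simp: field_simps)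
  have qd: "q * d \<le> k" "k + 1 \<le> (q + 1) * d"
  proof -
    have "k = q * d + k mod d" by (simp add: q_def)
    moreover have "k mod d < d" using dpos by simp
    moreover have "(q + 1) * d = q * d + d" by simp
    ultimately show "q * d \<le> k" "k + 1 \<le> (q + 1) * d" by linarith+
  qed
  have qd': "real q * real d \<le> real k" "real k + 1 \<le> (real q + 1) * real d"
    using qd by (simp_all flip: of_nat_mult of_nat_add of_nat_1 of_nat_Suc)
  have tm: "2 ^ m * t = (2 ^ i * t) * real d" using m by simp
  have dpos': "real d > 0" using dpos by simp
  have "real q * real d < (2 ^ i * t) * real d"
    using qd'(1) t1(1) tm by linarith
  then have "real q < 2 ^ i * t" using dpos' by (metis mult_less_cancel_right_pos)
  moreover have "(2 ^ i * t) * real d < (real q + 1) * real d"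
    using qd'(2) t1(2) tm by linarith
  then have "2 ^ i * t < real q + 1" using dpos' by (metis mult_less_cancel_right_pos)
  ultimately have "sgn (sin (pi * (2 ^ i * t))) = (-1) ^ q" by (rule sin_sign)
  then show ?thesis unfolding rademacher_def q_def d_def by (simp add: mult.assoc mult.left_commute)
qed

lemma step_integral:
  fixes f :: "real \<Rightarrow> real" and N :: nat
  assumes N: "N > 0"
    and h: "\<And>k t. k < N \<Longrightarrow> real k / N < t \<Longrightarrow> t < (real k + 1) / N \<Longrightarrow> f t = c k"
  shows "(f has_integral (\<Sum>k<N. c k) / N) {0..1}"
proof -
  have "n \<le> N \<Longrightarrow> (f has_integral (\<Sum>k<n. c k) / N) {0..real n / N}" for n
  proof (induction n)
    case 0
    have "(f has_integral 0) {0..0::real}" by (rule has_integral_null_real) simp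
    then show ?case by simp
  next
    case (Suc n)
    have piece: "(f has_integral c n / N) {real n / N..(real n + 1) / N}"
    proof (rule has_integral_spike[where S="{real n / N, (real n + 1) / N}" and f="\<lambda>_. c n"])
      show "negligible {real n / N, (real n + 1) / N}" by auto
      show "f x = c n" if "x \<in> {real n / N..(real n + 1) / N} - {real n / N, (real n + 1) / N}" for x
      proof (rule h)
        show "n < N" using Suc.prems by simp
        show "real n / real N < x" "x < (real n + 1) / real N" using that by auto
      qed
      show "((\<lambda>_. c n) has_integral c n / N) {real n / N..(real n + 1) / N}"
        using has_integral_const_real[of "c n" "real n / N" "(real n + 1) / N"] N by (simp add: field_simps)
    qed
    have "(f has_integral (\<Sum>k<n. c k) / N + c n / N) {0..(real n + 1) / N}"
      by (rule has_integral_combine[OF _ _ Suc.IH piece]) (use Suc.prems N divide_right_mono[of "real n" "real n + 1" "real N"] in auto)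
    then show ?case by (simp add: add_divide_distrib add.commute)
  qed
  from this[of N] N show ?thesis by simp
qed



lemma sign_bit: "(-1::real) ^ (k div 2 ^ e) = (if bit k e then -1 else 1)"
  by (simp add: bit_iff_odd minus_one_power_iff)

lemma orth_discrete:
  fixes e f m :: nat
  assumes "e < m" "f < m"
  shows "(\<Sum>k<2^m. (-1::real) ^ (k div 2 ^ e) * (-1) ^ (k div 2 ^ f)) = (if e = f then 2 ^ m else 0)"
proof (cases "e = f")
  case True
  have "(-1::real) ^ (k div 2 ^ e) * (-1) ^ (k div 2 ^ e) = 1" for k
    by (simp add: sign_bit)
  then show ?thesis using True by simp
next
  case False
  define g where "g k = (-1::real) ^ (k div 2 ^ e) * (-1) ^ (k div 2 ^ f)" for k :: nat
  define \<sigma> where "\<sigma> k = Bit_Operations.xor k (2 ^ e)" for k :: nat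
  have bs: "bit (\<sigma> k) n \<longleftrightarrow> (bit k n \<noteq> (n = e))" for k n
    by (auto simp: \<sigma>_def bit_simps)
  have inv: "\<sigma> (\<sigma> k) = k" for k
    by (rule bit_eqI) (auto simp: bs)
  have lt: "\<sigma> k < 2 ^ m" if "k < 2 ^ m" for k
  proof -
    have "take_bit m k = k" using that by (simp add: take_bit_nat_eq_self_iff)
    moreover have "take_bit m (2 ^ e :: nat) = 2 ^ e" using assms by simp
    ultimately have "take_bit m (\<sigma> k) = \<sigma> k" by (simp add: \<sigma>_def)
    then show ?thesis by (simp add: take_bit_nat_eq_self_iff)
  qed
  have neg: "g (\<sigma> k) = - g k" for k
    using False by (simp add: g_def sign_bit bs)
  have "(\<Sum>k<2^m. g k) = (\<Sum>k<2^m. g (\<sigma> k))"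
    by (rule sum.reindex_bij_witness[where i=\<sigma> and j=\<sigma>]) (auto simp: inv lt)
  also have "\<dots> = - (\<Sum>k<2^m. g k)" by (simp add: neg sum_negf)
  finally have "(\<Sum>k<2^m. g k) = 0" by simp
  then show ?thesis using False by (simp add: g_def)
qed



definition sg :: "nat \<Rightarrow> nat \<Rightarrow> nat \<Rightarrow> real" where
  "sg m i k = (-1) ^ (k div 2 ^ (m - i))"

lemma rad_avg_discrete:
  fixes v :: "nat \<Rightarrow> 'a::real_normed_vector"
  shows "rad_avg v m = sqrt ((\<Sum>k<2^m. (norm (\<Sum>i=1..m. sg m i k *\<^sub>R v i))\<^sup>2) / 2 ^ m)"
proof -
  have "((\<lambda>t. (norm (\<Sum>i=1..m. rademacher i t *\<^sub>R v i))\<^sup>2) has_integral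
          (\<Sum>k<2^m. (norm (\<Sum>i=1..m. sg m i k *\<^sub>R v i))\<^sup>2) / real (2 ^ m)) {0..1}"
  proof (rule step_integral)
    show "0 < (2::nat) ^ m" by simp
    fix k t assume "k < 2 ^ m" "real k / real (2 ^ m) < t" "t < (real k + 1) / real (2 ^ m)"
    then have t: "real k / 2 ^ m < t" "t < (real k + 1) / 2 ^ m" by simp_all
    have "(\<Sum>i=1..m. rademacher i t *\<^sub>R v i) = (\<Sum>i=1..m. sg m i k *\<^sub>R v i)"
      by (rule sum.cong) (use t rademacher_step in \<open>auto simp: sg_def\<close>)
    then show "(norm (\<Sum>i=1..m. rademacher i t *\<^sub>R v i))\<^sup>2 = (norm (\<Sum>i=1..m. sg m i k *\<^sub>R v i))\<^sup>2"
      by simp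
  qed
  then show ?thesis unfolding rad_avg_def by (simp add: integral_unique)
qed

lemma cs_sqrt:
  fixes x y :: "nat \<Rightarrow> real"
  shows "(\<Sum>k\<in>I. x k * y k) \<le> sqrt (\<Sum>k\<in>I. (x k)\<^sup>2) * sqrt (\<Sum>k\<in>I. (y k)\<^sup>2)"
proof -
  have "(\<Sum>k\<in>I. x k * y k) \<le> sqrt ((\<Sum>k\<in>I. x k * y k)\<^sup>2)" by simp
  also have "\<dots> \<le> sqrt ((\<Sum>k\<in>I. (x k)\<^sup>2) * (\<Sum>k\<in>I. (y k)\<^sup>2))"
    by (rule real_sqrt_le_mono) (rule Cauchy_Schwarz_ineq_sum)
  finally show ?thesis by (simp add: real_sqrt_mult)
qed

lemma sg_orth:
  assumes "i \<in> {1..m}" "j \<in> {1..m}"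
  shows "(\<Sum>k<2^m. sg m i k * sg m j k) = (if i = j then 2 ^ m else 0)"
proof -
  have "(\<Sum>k<2^m. sg m i k * sg m j k) = (if m - i = m - j then 2 ^ m else 0)"
    unfolding sg_def by (rule orth_discrete) (use assms in auto)
  moreover have "(m - i = m - j) = (i = j)" using assms by auto
  ultimately show ?thesis by simp
qed

lemma key:
  fixes a :: "nat \<Rightarrow> ('a::real_normed_vector \<Rightarrow>\<^sub>L real)" and b :: "nat \<Rightarrow> 'a"
  shows "(\<Sum>i=1..m. blinfun_apply (a i) (b i)) \<le> rad_avg a m * rad_avg b m"
proof -
  define N :: real where "N = 2 ^ m"
  have Npos: "N > 0" by (simp add: N_def)
  define A where "A k = (\<Sum>i=1..m. sg m i k *\<^sub>R a i)" for k
  define B where "B k = (\<Sum>i=1..m. sg m i k *\<^sub>R b i)" for k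
  have AB: "blinfun_apply (A k) (B k) = (\<Sum>i=1..m. \<Sum>j=1..m. (sg m i k * sg m j k) * blinfun_apply (a i) (b j))" for k
    unfolding A_def B_def
    by (simp add: blinfun.sum_left blinfun.sum_right blinfun.scaleR_left blinfun.scaleR_right sum_distrib_left mult_ac) (subst sum.swap, simp add: mult_ac)
  have "(\<Sum>k<2^m. blinfun_apply (A k) (B k))
      = (\<Sum>i=1..m. \<Sum>j=1..m. (\<Sum>k<2^m. sg m i k * sg m j k) * blinfun_apply (a i) (b j))"
    unfolding AB by (simp add: sum_distrib_right sum.swap[of _ "{..<2^m}"])
  also have "\<dots> = (\<Sum>i=1..m. \<Sum>j=1..m. (if i = j then N else 0) * blinfun_apply (a i) (b j))"
    by (intro sum.cong refl) (simp add: sg_orth N_def)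
  also have "\<dots> = N * (\<Sum>i=1..m. blinfun_apply (a i) (b i))"
  proof -
    have "(\<Sum>j=1..m. (if i = j then N else 0) * blinfun_apply (a i) (b j)) = N * blinfun_apply (a i) (b i)"
      if "i \<in> {1..m}" for i
    proof -
      have "(\<Sum>j=1..m. (if i = j then N else 0) * blinfun_apply (a i) (b j))
          = (\<Sum>j=1..m. (if i = j then N * blinfun_apply (a i) (b j) else 0))"
        by (rule sum.cong) auto
      also have "\<dots> = N * blinfun_apply (a i) (b i)" using that by (simp add: sum.delta)
      finally show ?thesis .
    qed
    then show ?thesis by (simp add: sum_distrib_left)
  qed
  finally have eq: "N * (\<Sum>i=1..m. blinfun_apply (a i) (b i)) = (\<Sum>k<2^m. blinfun_apply (A k) (B k))" by simp
  also have "\<dots> \<le> (\<Sum>k<2^m. norm (A k) * norm (B k))"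
  proof (rule sum_mono)
    fix k
    have "blinfun_apply (A k) (B k) \<le> norm (blinfun_apply (A k) (B k))" by simp
    also have "\<dots> \<le> norm (A k) * norm (B k)" by (rule norm_blinfun)
    finally show "blinfun_apply (A k) (B k) \<le> norm (A k) * norm (B k)" .
  qed
  also have "\<dots> \<le> sqrt (\<Sum>k<2^m. (norm (A k))\<^sup>2) * sqrt (\<Sum>k<2^m. (norm (B k))\<^sup>2)"
    by (rule cs_sqrt)
  also have "\<dots> = N * (rad_avg a m * rad_avg b m)"
  proof -
    have "rad_avg a m * rad_avg b m = sqrt ((\<Sum>k<2^m. (norm (A k))\<^sup>2) / N) * sqrt ((\<Sum>k<2^m. (norm (B k))\<^sup>2) / N)"
      unfolding rad_avg_discrete A_def B_def N_def ..
    also have "\<dots> = sqrt (\<Sum>k<2^m. (norm (A k))\<^sup>2) * sqrt (\<Sum>k<2^m. (norm (B k))\<^sup>2) / N"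
      using Npos by (simp add: real_sqrt_divide real_sqrt_mult[symmetric])
    finally show ?thesis using Npos by simp
  qed
  finally have "N * (\<Sum>i=1..m. blinfun_apply (a i) (b i)) \<le> N * (rad_avg a m * rad_avg b m)" .
  then show ?thesis using Npos by (rule mult_left_le_imp_le)
qed



lemma shift_sum: "(\<Sum>j=1..m. h (j - 1)) = (\<Sum>i<m. (h i :: real))" for m :: nat
  by (induction m) auto

lemma seq_norm_trunc:
  assumes s: "s = \<infinity> \<or> (\<exists>r>0. s = ereal r)"
  shows "seq_norm s (\<lambda>i. if i \<in> {1..m} then a (i - 1) else 0) \<le> seq_norm s a"
proof (cases "s = \<infinity>")
  case True
  have "(SUP i. ereal \<bar>if i \<in> {1..m} then a (i - 1) else 0\<bar>) \<le> (SUP i. ereal \<bar>a i\<bar>)"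
  proof (rule SUP_least)
    fix i
    show "ereal \<bar>if i \<in> {1..m} then a (i - 1) else 0\<bar> \<le> (SUP i. ereal \<bar>a i\<bar>)"
    proof (cases "i \<in> {1..m}")
      case True
      have "ereal \<bar>a (i - 1)\<bar> \<le> (SUP i. ereal \<bar>a i\<bar>)" by (rule SUP_upper) simp
      then show ?thesis using True by simp
    next
      case False
      have "ereal 0 \<le> ereal \<bar>a 0\<bar>" by simp
      also have "\<dots> \<le> (SUP i. ereal \<bar>a i\<bar>)" by (rule SUP_upper) simp
      finally have z: "ereal 0 \<le> (SUP i. ereal \<bar>a i\<bar>)" .
      have "(if i \<in> {1..m} then a (i - 1) else 0) = 0" using False by auto
      then show ?thesis using z by simp
    qed
  qed
  then show ?thesis using True by (simp add: seq_norm_def)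
next
  case False
  then obtain r where r: "r > 0" "s = ereal r" using s by auto
  define c where "c i = (if i \<in> {1..m} then a (i - 1) else 0)" for i
  have cz: "\<bar>c i\<bar> powr r = 0" if "i \<notin> {1..m}" for i using that by (auto simp: c_def)
  have sc: "summable (\<lambda>i. \<bar>c i\<bar> powr r)" by (rule summable_finite[of "{1..m}"]) (use cz in auto)
  have sumc: "(\<Sum>i. \<bar>c i\<bar> powr r) = (\<Sum>i<m. \<bar>a i\<bar> powr r)"
  proof -
    have "(\<Sum>i. \<bar>c i\<bar> powr r) = (\<Sum>i\<in>{1..m}. \<bar>c i\<bar> powr r)" by (rule suminf_finite) (use cz in auto)
    also have "\<dots> = (\<Sum>j=1..m. \<bar>a (j - 1)\<bar> powr r)" by (rule sum.cong) (auto simp: c_def)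
    also have "\<dots> = (\<Sum>i<m. \<bar>a i\<bar> powr r)" by (rule shift_sum)
    finally show ?thesis .
  qed
  show ?thesis
  proof (cases "summable (\<lambda>i. \<bar>a i\<bar> powr r)")
    case True
    have "(\<Sum>i<m. \<bar>a i\<bar> powr r) \<le> (\<Sum>i. \<bar>a i\<bar> powr r)"
      by (rule sum_le_suminf[OF True]) auto
    then have "(\<Sum>i. \<bar>c i\<bar> powr r) powr (1 / r) \<le> (\<Sum>i. \<bar>a i\<bar> powr r) powr (1 / r)"
      unfolding sumc using r by (intro powr_mono2) (auto intro: sum_nonneg)
    then show ?thesis using r sc True by (simp add: seq_norm_def c_def[abs_def])
  next
    case False
    then show ?thesis using r by (simp add: seq_norm_def)
  qed
qed

lemma weak_norm_trunc:
  fixes ys :: "nat \<Rightarrow> 'a::real_normed_vector"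
  assumes s: "s = \<infinity> \<or> (\<exists>r>0. s = ereal r)"
  shows "weak_norm s (\<lambda>i. if i \<in> {1..m} then ys (i - 1) else 0) \<le> weak_norm s ys"
  unfolding weak_norm_def
proof (rule SUP_mono)
  fix f :: "'a \<Rightarrow>\<^sub>L real" assume f: "f \<in> {f. norm f \<le> 1}"
  have "(\<lambda>i. blinfun_apply f (if i \<in> {1..m} then ys (i - 1) else 0))
      = (\<lambda>i. if i \<in> {1..m} then blinfun_apply f (ys (i - 1)) else 0)"
    by (auto simp: blinfun.zero_right)
  then have "seq_norm s (\<lambda>i. blinfun_apply f (if i \<in> {1..m} then ys (i - 1) else 0)) \<le> seq_norm s (\<lambda>i. blinfun_apply f (ys i))"
    using seq_norm_trunc[OF s, of m "\<lambda>i. blinfun_apply f (ys i)"] by simp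
  then show "\<exists>g\<in>{f. norm f \<le> 1}. seq_norm s (\<lambda>i. blinfun_apply f (if i \<in> {1..m} then ys (i - 1) else 0)) \<le> seq_norm s (\<lambda>i. blinfun_apply g (ys i))"
    using f by blast
qed



lemma rad_avg_nonneg: "rad_avg v m \<ge> 0"
  unfolding rad_avg_discrete by (intro real_sqrt_ge_zero divide_nonneg_pos sum_nonneg) auto

theorem corollary2p3:
  fixes p :: real and u :: "'a::banach \<Rightarrow>\<^sub>L 'b::banach"
  assumes "1 \<le> p" and "p \<le> 2"
    and "has_type TYPE('a) p"
    and "almost_summing (conj_exp p) (\<lambda>y' :: 'b \<Rightarrow>\<^sub>L real. y' o\<^sub>L u)"
  shows "cohen_strongly_summing p u"
proof -
  obtain Ct where Ct: "Ct \<ge> 0" "\<And>m (x :: nat \<Rightarrow> 'a). rad_avg x m \<le> Ct * (\<Sum>i=1..m. norm (x i) powr p) powr (1 / p)"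
    using assms(3) unfolding has_type_def by blast
  obtain Ca where Ca: "Ca \<ge> 0" "\<And>m (x :: nat \<Rightarrow> ('b \<Rightarrow>\<^sub>L real)).
      ereal (rad_avg (\<lambda>i. x i o\<^sub>L u) m) \<le> ereal Ca * weak_norm (conj_exp p) (\<lambda>i. if i \<in> {1..m} then x i else 0)"
    using assms(4) unfolding almost_summing_def by blast
  have sform: "conj_exp p = \<infinity> \<or> (\<exists>r>0. conj_exp p = ereal r)"
  proof (cases "p = 1")
    case False
    then have "p / (p - 1) > 0" using assms(1) by simp
    then show ?thesis using False by (auto simp: conj_exp_def)
  qed (simp add: conj_exp_def)
  have ppos: "p > 0" using assms(1) by simp
  show ?thesis unfolding cohen_strongly_summing_def
  proof (intro allI impI)
    fix x :: "nat \<Rightarrow> 'a"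
    assume "in_lp p x"
    then have sx: "summable (\<lambda>i. norm (x i) powr p)" by (simp add: in_lp_def)
    define S where "S = (\<Sum>i. norm (x i) powr p)"
    define B where "B = Ca * (Ct * S powr (1 / p))"
    have bound: "(if summable (\<lambda>i. \<bar>blinfun_apply (ys i) (u (x i))\<bar>)
           then ereal (\<Sum>i. \<bar>blinfun_apply (ys i) (u (x i))\<bar>) else \<infinity>) \<le> ereal B"
      if ys: "weak_norm (conj_exp p) ys \<le> 1" for ys :: "nat \<Rightarrow> ('b \<Rightarrow>\<^sub>L real)"
    proof -
      define g where "g i = \<bar>blinfun_apply (ys i) (u (x i))\<bar>" for i
      have partial: "(\<Sum>i<m. g i) \<le> B" for m
      proof -
        define a where "a j = ys (j - 1) o\<^sub>L u" for j
        define b where "b j = sgn (blinfun_apply (ys (j - 1)) (u (x (j - 1)))) *\<^sub>R x (j - 1)" for j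
        have ab: "blinfun_apply (a j) (b j) = g (j - 1)" for j
          by (simp add: a_def b_def g_def blinfun.scaleR_right) (simp add: sgn_real_def abs_real_def)
        have "(\<Sum>i<m. g i) = (\<Sum>j=1..m. blinfun_apply (a j) (b j))"
          unfolding ab by (rule shift_sum[symmetric])
        also have "\<dots> \<le> rad_avg a m * rad_avg b m" by (rule key)
        also have "\<dots> \<le> Ca * (Ct * S powr (1 / p))"
        proof (rule mult_mono)
          have "ereal (rad_avg a m) \<le> ereal Ca * weak_norm (conj_exp p) (\<lambda>i. if i \<in> {1..m} then ys (i - 1) else 0)"
            using Ca(2)[where m=m and x="\<lambda>i. ys (i - 1)"] by (simp add: a_def[abs_def])
          also have "\<dots> \<le> ereal Ca * 1"
          proof (rule ereal_mult_left_mono)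
            show "weak_norm (conj_exp p) (\<lambda>i. if i \<in> {1..m} then ys (i - 1) else 0) \<le> 1"
              using weak_norm_trunc[OF sform, of m ys] ys by simp
          qed (use Ca in simp)
          finally show "rad_avg a m \<le> Ca" by simp
          have "rad_avg b m \<le> Ct * (\<Sum>i=1..m. norm (b i) powr p) powr (1 / p)" by (rule Ct(2))
          also have "\<dots> \<le> Ct * S powr (1 / p)"
          proof (rule mult_left_mono[OF _ Ct(1)])
            have "(\<Sum>i=1..m. norm (b i) powr p) \<le> (\<Sum>i=1..m. norm (x (i - 1)) powr p)"
            proof (rule sum_mono)
              fix i
              have "norm (b i) \<le> norm (x (i - 1))"
                by (auto simp: b_def sgn_real_def)
              then show "norm (b i) powr p \<le> norm (x (i - 1)) powr p"
                using ppos by (intro powr_mono2) auto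
            qed
            also have "\<dots> = (\<Sum>i<m. norm (x i) powr p)" by (rule shift_sum)
            also have "\<dots> \<le> S" unfolding S_def by (rule sum_le_suminf[OF sx]) auto
            finally show "(\<Sum>i=1..m. norm (b i) powr p) powr (1 / p) \<le> S powr (1 / p)"
              using ppos by (intro powr_mono2) (auto intro: sum_nonneg)
          qed
          finally show "rad_avg b m \<le> Ct * S powr (1 / p)" .
        qed (auto simp: rad_avg_nonneg Ca(1))
        finally show ?thesis by (simp add: B_def)
      qed
      have gnn: "0 \<le> g i" for i by (simp add: g_def)
      have summ: "summable g"
      proof (rule bounded_imp_summable[OF gnn])
        fix n show "(\<Sum>k\<le>n. g k) \<le> B" using partial[of "Suc n"] by (simp add: lessThan_Suc_atMost)
      qed
      have "suminf g \<le> B" by (rule suminf_le_const[OF summ partial])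
      then show ?thesis using summ by (simp add: g_def[abs_def])
    qed
    have sup_le: "(SUP ys\<in>{ys :: nat \<Rightarrow> ('b \<Rightarrow>\<^sub>L real). weak_norm (conj_exp p) ys \<le> 1}.
        (if summable (\<lambda>i. \<bar>blinfun_apply (ys i) (u (x i))\<bar>)
         then ereal (\<Sum>i. \<bar>blinfun_apply (ys i) (u (x i))\<bar>) else \<infinity>)) \<le> ereal B"
      by (rule SUP_least) (use bound in auto)
    show "in_cohen_lp p (\<lambda>i. blinfun_apply u (x i))"
      unfolding in_cohen_lp_def using le_less_trans[OF sup_le, of \<infinity>] by simp
  qed
qed

end
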